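(* Let $(p_1,\alpha^1,\beta^1)$ and $(p_2,\alpha^2,\beta^2)$ be two equilibria, with demand and supply maps $D_1,S_1$ (for $p_1$) and $D_2,S_2$ (for $p_2$), and conditional probabilities $P^1_x,P^1_y$ and $P^2_x,P^2_y$. Then $P^2_x[D_1(x)]=P^1_x[D_1(x)]=1$ for $\mu$-almost every $x\in X$, and $P^2_y[S_1(y)]=P^1_y[S_1(y)]=1$ for $\nu$-almost every $y\in Y$.
   Context: Standing setting. $X\subset\mathbb R^{d_1}$, $Y\subset\mathbb R^{d_2}$, $Z_0\subset\mathbb R^{d_3}$ are compact sets (possibly finite). $\mu$ and $\nu$ are finite nonnegative Borel measures on $X$ and $Y$. $u$ is a continuous real function on a neighbourhood of $X\times Z_0$, differentiable in $x$ with $D_xu$ continuous; $v$ is a continuous real function on a neighbourhood of $Y\times Z_0$, differentiable in $y$ with $D_yv$ continuous. Let $\varnothing_d\neq\varnothing_s$ be two points not in $Z_0$ and $Z=Z_0\cup\{\varnothing_d\}\cup\{\varnothing_s\}$ (the added points isolated). Extend $u,v$ by $u(x,\varnothing_d)=0$, $u(x,\varnothing_s)=-1$, $v(y,\varnothing_s)=0$, $v(y,\varnothing_d)=1$. Define $b(z)=\max_{x}u(x,z)$, $a(z)=\min_{y}v(y,z)$, $Z_1=\{z\in Z: a(z)\le b(z)\}$. A price system is a continuous $p:Z\to\mathbb R$ with $p(\varnothing_d)=p(\varnothing_s)=0$; admissible if $a\le p\le b$ on $Z_1$. Given $p$: $D(x)=\arg\max_{z\in Z}\{u(x,z)-p(z)\}$,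 $S(y)=\arg\min_{z\in Z}\{v(y,z)-p(z)\}$. A demand distribution associated with $p$ is a positive Borel measure $\alpha$ on $X\times Z$ carried by the graph of $D$ with $X$-marginal $\mu$; a supply distribution is a positive Borel measure $\beta$ on $Y\times Z$ carried by the graph of $S$ with $Y$-marginal $\nu$. The conditional probabilities $(P^\alpha_x)_{x\in X}$ are the Borel probabilities on $Z$ disintegrating $\alpha$ with respect to $\mu$: $\int f\,d\alpha=\int_X\int_Z f(x,z)\,dP^\alpha_x(z)\,d\mu(x)$ for continuous $f$; similarly $(P^\beta_y)$ for $\beta$ with respect to $\nu$. An equilibrium is a triple $(p,\alpha,\beta)$ with $p$ admissible, $\alpha,\beta$ demand and supply distributions associated with $p$, and $\alpha_Z(A)=\beta_Z(A)$ for every Borel $A\subset Z_0$ ($\alpha_Z,\beta_Z$ the $Z$-marginals). For equilibrium $i$, $P^i_x:=P^{\alpha^i}_x$, $P^i_y:=P^{\beta^i}_y$. *)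

theory Defs
  imports "HOL-Probability.Probability"
begin

text \<open>The two extra goods zd (no demand / "empty_d") and zs ("empty_s") are two distinct
  points of 'c outside the compact set Z0 (hence isolated in Z).\<close>

definition Zset :: "'c set \<Rightarrow> 'c \<Rightarrow> 'c \<Rightarrow> 'c set" where
  "Zset Z0 zd zs = Z0 \<union> {zd, zs}"

definition C1_first :: "'a::euclidean_space set \<Rightarrow> 'c::euclidean_space set \<Rightarrow> ('a \<Rightarrow> 'c \<Rightarrow> real) \<Rightarrow> bool" where
  "C1_first X Z0 u \<longleftrightarrow> (\<exists>U Du. open U \<and> X \<times> Z0 \<subseteq> U \<and>
      continuous_on U (\<lambda>(x,z). u x z) \<and>
      (\<forall>(x,z)\<in>U. ((\<lambda>x'. u x' z) has_derivative (\<lambda>h. Du x z \<bullet> h)) (at x)) \<and>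
      continuous_on U (\<lambda>(x,z). Du x z))"

definition uext :: "'c \<Rightarrow> 'c \<Rightarrow> ('a \<Rightarrow> 'c \<Rightarrow> real) \<Rightarrow> 'a \<Rightarrow> 'c \<Rightarrow> real" where
  "uext zd zs u x z = (if z = zd then 0 else if z = zs then -1 else u x z)"

definition vext :: "'c \<Rightarrow> 'c \<Rightarrow> ('b \<Rightarrow> 'c \<Rightarrow> real) \<Rightarrow> 'b \<Rightarrow> 'c \<Rightarrow> real" where
  "vext zd zs v y z = (if z = zs then 0 else if z = zd then 1 else v y z)"

definition bfun :: "'a set \<Rightarrow> ('a \<Rightarrow> 'c \<Rightarrow> real) \<Rightarrow> 'c \<Rightarrow> real" where
  "bfun X uE z = (SUP x\<in>X. uE x z)"

definition afun :: "'b set \<Rightarrow> ('b \<Rightarrow> 'c \<Rightarrow> real) \<Rightarrow> 'c \<Rightarrow> real" where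
  "afun Y vE z = (INF y\<in>Y. vE y z)"

definition Z1set :: "'a set \<Rightarrow> 'b set \<Rightarrow> 'c set \<Rightarrow> ('a \<Rightarrow> 'c \<Rightarrow> real) \<Rightarrow> ('b \<Rightarrow> 'c \<Rightarrow> real) \<Rightarrow> 'c set" where
  "Z1set X Y Z uE vE = {z \<in> Z. afun Y vE z \<le> bfun X uE z}"

definition price_system :: "'c::topological_space set \<Rightarrow> 'c \<Rightarrow> 'c \<Rightarrow> ('c \<Rightarrow> real) \<Rightarrow> bool" where
  "price_system Z zd zs p \<longleftrightarrow> continuous_on Z p \<and> p zd = 0 \<and> p zs = 0"

definition admissible :: "'a set \<Rightarrow> 'b set \<Rightarrow> 'c::topological_space set \<Rightarrow> 'c \<Rightarrow> 'c \<Rightarrow>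
    ('a \<Rightarrow> 'c \<Rightarrow> real) \<Rightarrow> ('b \<Rightarrow> 'c \<Rightarrow> real) \<Rightarrow> ('c \<Rightarrow> real) \<Rightarrow> bool" where
  "admissible X Y Z zd zs uE vE p \<longleftrightarrow> price_system Z zd zs p \<and>
     (\<forall>z\<in>Z1set X Y Z uE vE. afun Y vE z \<le> p z \<and> p z \<le> bfun X uE z)"

definition Dset :: "'c set \<Rightarrow> ('a \<Rightarrow> 'c \<Rightarrow> real) \<Rightarrow> ('c \<Rightarrow> real) \<Rightarrow> 'a \<Rightarrow> 'c set" where
  "Dset Z uE p x = {z \<in> Z. \<forall>z'\<in>Z. uE x z' - p z' \<le> uE x z - p z}"

definition Sset :: "'c set \<Rightarrow> ('b \<Rightarrow> 'c \<Rightarrow> real) \<Rightarrow> ('c \<Rightarrow> real) \<Rightarrow> 'b \<Rightarrow> 'c set" where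
  "Sset Z vE p y = {z \<in> Z. \<forall>z'\<in>Z. vE y z - p z \<le> vE y z' - p z'}"

definition carried_distribution :: "'a::topological_space set \<Rightarrow> 'c::topological_space set \<Rightarrow>
    'a measure \<Rightarrow> ('a \<Rightarrow> 'c set) \<Rightarrow> ('a \<times> 'c) measure \<Rightarrow> bool" where
  "carried_distribution X Z mu F alpha \<longleftrightarrow>
     sets alpha = sets (restrict_space borel (X \<times> Z)) \<and>
     (AE w in alpha. snd w \<in> F (fst w)) \<and>
     distr alpha mu fst = mu"

definition equilibrium :: "'a::topological_space set \<Rightarrow> 'b::topological_space set \<Rightarrow>
    'c::topological_space set \<Rightarrow> 'c \<Rightarrow> 'c \<Rightarrow> 'a measure \<Rightarrow> 'b measure \<Rightarrow>
    ('a \<Rightarrow> 'c \<Rightarrow> real) \<Rightarrow> ('b \<Rightarrow> 'c \<Rightarrow> real) \<Rightarrow>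
    ('c \<Rightarrow> real) \<Rightarrow> ('a \<times> 'c) measure \<Rightarrow> ('b \<times> 'c) measure \<Rightarrow> bool" where
  "equilibrium X Y Z0 zd zs mu nu uE vE p alpha beta \<longleftrightarrow>
     admissible X Y (Zset Z0 zd zs) zd zs uE vE p \<and>
     carried_distribution X (Zset Z0 zd zs) mu (Dset (Zset Z0 zd zs) uE p) alpha \<and>
     carried_distribution Y (Zset Z0 zd zs) nu (Sset (Zset Z0 zd zs) vE p) beta \<and>
     (\<forall>A. A \<in> sets borel \<and> A \<subseteq> Z0 \<longrightarrow> emeasure alpha (X \<times> A) = emeasure beta (Y \<times> A))"

definition disintegrates :: "'a::topological_space set \<Rightarrow> 'c::topological_space set \<Rightarrow>
    'a measure \<Rightarrow> ('a \<times> 'c) measure \<Rightarrow> ('a \<Rightarrow> 'c measure) \<Rightarrow> bool" where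
  "disintegrates X Z mu alpha P \<longleftrightarrow>
     (\<forall>x\<in>X. prob_space (P x) \<and> sets (P x) = sets (restrict_space borel Z)) \<and>
     (\<forall>f :: 'a \<times> 'c \<Rightarrow> real. continuous_on (X \<times> Z) f \<longrightarrow>
        integrable mu (\<lambda>x. \<integral>z. f (x, z) \<partial>(P x)) \<and>
        (\<integral>w. f w \<partial>alpha) = (\<integral>x. (\<integral>z. f (x, z) \<partial>(P x)) \<partial>mu))"

end

theory Submission
  imports Defs
begin


lemma sup_le_shift:
  fixes a b :: "'c \<Rightarrow> real"
  assumes "Z \<noteq> {}" "bdd_above (b ` Z)" "\<And>z. z \<in> Z \<Longrightarrow> a z \<le> b z + c"
  shows "(SUP z\<in>Z. a z) \<le> (SUP z\<in>Z. b z) + c"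
proof (rule cSUP_least[OF assms(1)])
  fix z assume "z \<in> Z"
  have "b z \<le> (SUP z\<in>Z. b z)" using cSUP_upper[OF \<open>z\<in>Z\<close> assms(2)] .
  then show "a z \<le> (SUP z\<in>Z. b z) + c" using assms(3)[OF \<open>z\<in>Z\<close>] by linarith
qed

lemma slice_cont:
  assumes "continuous_on (X \<times> Z) f" "x \<in> X"
  shows "continuous_on Z (\<lambda>z. f (x, z))"
  by (rule continuous_on_compose2[OF assms(1), of Z "\<lambda>z. (x,z)"])
     (use assms(2) in \<open>auto intro!: continuous_intros\<close>)

lemma slice_bdd:
  fixes f :: "'a::topological_space \<times> 'c::topological_space \<Rightarrow> real"
  assumes "continuous_on (X \<times> Z) f" "x \<in> X" "compact Z"
  shows "bdd_above ((\<lambda>z. f (x, z)) ` Z)"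
  by (intro bounded_imp_bdd_above compact_imp_bounded compact_continuous_image assms(3) slice_cont[OF assms(1,2)])

lemma sup_cont:
  fixes f :: "'a::metric_space \<times> 'c::metric_space \<Rightarrow> real"
  assumes X: "compact X" and Z: "compact Z" "Z \<noteq> {}" and f: "continuous_on (X \<times> Z) f"
  shows "continuous_on X (\<lambda>x. SUP z\<in>Z. f (x,z))"
proof -
  have uc: "uniformly_continuous_on (X \<times> Z) f"
    using compact_uniformly_continuous[OF f] compact_Times[OF X Z(1)] by blast
  show ?thesis unfolding continuous_on_iff
  proof (intro ballI allI impI)
    fix x e assume x: "x \<in> X" and e: "(0::real) < e"
    obtain d where d: "d > 0" and dd: "\<forall>a\<in>X\<times>Z. \<forall>b\<in>X\<times>Z. dist b a < d \<longrightarrow> dist (f b) (f a) < e/2"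
      using uc e unfolding uniformly_continuous_on_def by (meson half_gt_zero)
    show "\<exists>d>0. \<forall>x'\<in>X. dist x' x < d \<longrightarrow> dist (SUP z\<in>Z. f (x',z)) (SUP z\<in>Z. f (x,z)) < e"
    proof (intro exI[of _ d] conjI ballI impI d)
      fix x' assume x': "x' \<in> X" and dx: "dist x' x < d"
      have cl: "\<bar>f (x',z) - f (x,z)\<bar> < e/2" if "z \<in> Z" for z
      proof -
        have "dist (x',z) (x,z) < d" using dx by (simp add: dist_Pair_Pair)
        then show ?thesis using dd x x' that by (auto simp: dist_real_def)
      qed
      have c1: "f (x',z) \<le> f (x,z) + e/2" "f (x,z) \<le> f (x',z) + e/2" if "z \<in> Z" for z
        using cl[OF that] by arith+
      have 1: "(SUP z\<in>Z. f (x',z)) \<le> (SUP z\<in>Z. f (x,z)) + e/2"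
        by (rule sup_le_shift[OF Z(2) slice_bdd[OF f x Z(1)]]) (rule c1; simp)
      have 2: "(SUP z\<in>Z. f (x,z)) \<le> (SUP z\<in>Z. f (x',z)) + e/2"
        by (rule sup_le_shift[OF Z(2) slice_bdd[OF f x' Z(1)]]) (rule c1; simp)
      show "dist (SUP z\<in>Z. f (x',z)) (SUP z\<in>Z. f (x,z)) < e"
        using 1 2 e by (simp add: dist_real_def abs_if)
    qed
  qed
qed

lemma space_rb: "sets M = sets (restrict_space borel S) \<Longrightarrow> space M = S"
  by (metis sets_eq_imp_space_eq space_restrict_space space_borel inf_top.right_neutral)

lemma carried_basic:
  fixes X :: "'a::euclidean_space set" and Z :: "'c::euclidean_space set"
  assumes c: "carried_distribution X Z mu F alpha"
    and smu: "sets mu = sets (restrict_space borel X)" and fmu: "finite_measure mu"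
  shows "space alpha = X \<times> Z" "finite_measure alpha" "fst \<in> measurable alpha mu" "space mu = X"
    "sets alpha = sets (restrict_space borel (X \<times> Z))"
proof -
  show sa: "sets alpha = sets (restrict_space borel (X \<times> Z))"
    using c unfolding carried_distribution_def by blast
  show spa: "space alpha = X \<times> Z" using space_rb[OF sa] .
  show "space mu = X" using space_rb[OF smu] .
  have "fst \<in> measurable (restrict_space borel (X \<times> Z)) (restrict_space borel X)"
    by (rule measurable_restrict_space3[OF borel_measurable_continuous_onI]) (auto intro!: continuous_intros)
  then show fm: "fst \<in> measurable alpha mu"
    using measurable_cong_sets[OF sa smu] by blast
  have d: "distr alpha mu fst = mu" using c unfolding carried_distribution_def by blast
  have "emeasure alpha (space alpha) = emeasure (distr alpha mu fst) (space mu)"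
    using emeasure_distr[OF fm sets.top[of mu]] fm
    by (metis (no_types, lifting) inf.absorb_iff2 measurable_space subsetI vimage_eq)
  also have "\<dots> = emeasure mu (space mu)" using d by simp
  also have "\<dots> \<noteq> \<infinity>" using finite_measure.emeasure_finite[OF fmu] by simp
  finally show "finite_measure alpha" by (rule finite_measureI)
qed

lemma cont_bounded:
  fixes f :: "'a::metric_space \<Rightarrow> real"
  assumes "compact S" "continuous_on S f"
  obtains B where "\<And>w. w \<in> S \<Longrightarrow> \<bar>f w\<bar> \<le> B"
proof -
  have "bounded (f ` S)" by (intro compact_imp_bounded compact_continuous_image assms)
  then obtain B where "\<forall>y\<in>f ` S. norm y \<le> B" unfolding bounded_iff by blast
  then show ?thesis using that by auto
qed

lemma cont_integrable:
  fixes f :: "'a::euclidean_space \<Rightarrow> real"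
  assumes sa: "sets alpha = sets (restrict_space borel S)" and fa: "finite_measure alpha"
    and "compact S" "continuous_on S f"
  shows "integrable alpha f"
proof -
  obtain B where B: "\<And>w. w \<in> S \<Longrightarrow> \<bar>f w\<bar> \<le> B" using cont_bounded assms(3,4) by blast
  have m: "f \<in> borel_measurable alpha"
    using borel_measurable_continuous_on_restrict[OF assms(4)] measurable_cong_sets[OF sa refl] by blast
  show ?thesis
    by (rule finite_measure.integrable_const_bound[OF fa _ m, of B])
       (use B space_rb[OF sa] in auto)
qed

lemma disint_one:
  fixes X :: "'a::euclidean_space set" and Z :: "'c::euclidean_space set" and g :: "'a \<times> 'c \<Rightarrow> real"
  assumes dis: "disintegrates X Z mu alpha P"
    and smu: "sets mu = sets (restrict_space borel X)"
    and X: "compact X" and Z: "compact Z"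
    and gc: "continuous_on (X \<times> Z) g" and gn: "\<And>x z. x \<in> X \<Longrightarrow> z \<in> Z \<Longrightarrow> 0 \<le> g (x,z)"
    and g0: "(\<integral>w. g w \<partial>alpha) = 0"
  shows "AE x in mu. measure (P x) {z\<in>Z. g (x,z) = 0} = 1"
proof -
  have spm: "space mu = X" using space_rb[OF smu] .
  have all: "\<forall>f :: 'a \<times> 'c \<Rightarrow> real. continuous_on (X \<times> Z) f \<longrightarrow>
        integrable mu (\<lambda>x. \<integral>z. f (x, z) \<partial>(P x)) \<and>
        (\<integral>w. f w \<partial>alpha) = (\<integral>x. (\<integral>z. f (x, z) \<partial>(P x)) \<partial>mu)"
    using dis unfolding disintegrates_def by (elim conjE) assumption
  note ie = all[rule_format, OF gc]
  note int = ie[THEN conjunct1] and eq = ie[THEN conjunct2]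
  have Px: "prob_space (P x)" "sets (P x) = sets (restrict_space borel Z)" if "x \<in> X" for x
    using dis that unfolding disintegrates_def by blast+
  have nn: "AE x in mu. 0 \<le> (\<integral>z. g (x, z) \<partial>(P x))"
  proof (rule AE_I2)
    fix x assume "x \<in> space mu"
    then have x: "x \<in> X" using spm by simp
    show "0 \<le> (\<integral>z. g (x, z) \<partial>(P x))"
      by (rule integral_nonneg_AE, rule AE_I2) (use gn x space_rb[OF Px(2)[OF x]] in auto)
  qed
  have "AE x in mu. (\<integral>z. g (x, z) \<partial>(P x)) = 0"
    using integral_nonneg_eq_0_iff_AE[OF int nn] g0 eq by simp
  then show ?thesis
  proof (rule AE_mp, intro AE_I2 impI)
    fix x assume "x \<in> space mu" and i0: "(\<integral>z. g (x, z) \<partial>(P x)) = 0"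
    then have x: "x \<in> X" using spm by simp
    have sp: "space (P x) = Z" using space_rb[OF Px(2)[OF x]] .
    have gcx: "continuous_on Z (\<lambda>z. g (x,z))" using slice_cont[OF gc x] .
    have intx: "integrable (P x) (\<lambda>z. g (x,z))"
      by (rule cont_integrable[OF Px(2)[OF x] prob_space.finite_measure[OF Px(1)[OF x]] Z gcx])
    have "(\<integral>z. g (x, z) \<partial>(P x)) = 0 \<longleftrightarrow> (AE z in P x. g (x,z) = 0)"
      by (rule integral_nonneg_eq_0_iff_AE[OF intx], rule AE_I2) (use gn x sp in auto)
    then have "AE z in P x. g (x,z) = 0" using i0 by simp
    moreover have "{z \<in> space (P x). g (x,z) = 0} \<in> sets (P x)"
    proof -
      have "(\<lambda>z. g (x,z)) \<in> borel_measurable (P x)"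
        using borel_measurable_continuous_on_restrict[OF gcx] measurable_cong_sets[OF Px(2)[OF x] refl] by blast
      then show ?thesis by measurable
    qed
    ultimately have "measure (P x) {z \<in> space (P x). g (x,z) = 0} = 1"
      using prob_space.prob_Collect_eq_1[OF Px(1)[OF x], of "\<lambda>z. g (x,z) = 0"] by simp
    then show "measure (P x) {z\<in>Z. g (x,z) = 0} = 1" using sp by simp
  qed
qed

lemma side:
  fixes X :: "'a::euclidean_space set" and Z :: "'c::euclidean_space set"
    and h :: "'a \<Rightarrow> 'c \<Rightarrow> real"
  assumes X: "compact X" and Z: "compact Z" "Z \<noteq> {}"
    and hc: "continuous_on (X \<times> Z) (\<lambda>w. h (fst w) (snd w))"
    and c: "carried_distribution X Z mu F alpha"
    and smu: "sets mu = sets (restrict_space borel X)" and fmu: "finite_measure mu"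
  shows "integrable alpha (\<lambda>w. h (fst w) (snd w))"
    "(\<integral>w. (SUP z\<in>Z. h (fst w) z) - h (fst w) (snd w) \<partial>alpha)
       = (\<integral>x. (SUP z\<in>Z. h x z) \<partial>mu) - (\<integral>w. h (fst w) (snd w) \<partial>alpha)"
    "0 \<le> (\<integral>w. (SUP z\<in>Z. h (fst w) z) - h (fst w) (snd w) \<partial>alpha)"
    "(\<forall>x\<in>X. F x \<subseteq> {z\<in>Z. \<forall>z'\<in>Z. h x z' \<le> h x z}) \<Longrightarrow>
       (\<integral>w. (SUP z\<in>Z. h (fst w) z) - h (fst w) (snd w) \<partial>alpha) = 0"
    "(\<integral>w. (SUP z\<in>Z. h (fst w) z) - h (fst w) (snd w) \<partial>alpha) = 0 \<Longrightarrow>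
       disintegrates X Z mu alpha P \<Longrightarrow>
       AE x in mu. measure (P x) {z\<in>Z. \<forall>z'\<in>Z. h x z' \<le> h x z} = 1"
proof -
  note cb = carried_basic[OF c smu fmu]
  define phi where "phi = (\<lambda>x. SUP z\<in>Z. h x z)"
  have phic: "continuous_on X phi"
    using sup_cont[OF X Z hc] unfolding phi_def by simp
  have bdd: "bdd_above (h x ` Z)" if "x \<in> X" for x
    using slice_bdd[OF hc that Z(1)] by simp
  have gn: "0 \<le> phi x - h x z" if "x \<in> X" "z \<in> Z" for x z
    using cSUP_upper[OF that(2) bdd[OF that(1)]] unfolding phi_def by simp
  have g0: "phi x - h x z = 0 \<longleftrightarrow> (\<forall>z'\<in>Z. h x z' \<le> h x z)" if "x \<in> X" "z \<in> Z" for x z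
  proof
    assume "phi x - h x z = 0"
    then show "\<forall>z'\<in>Z. h x z' \<le> h x z"
      using cSUP_upper[OF _ bdd[OF that(1)]] unfolding phi_def by auto
  next
    assume "\<forall>z'\<in>Z. h x z' \<le> h x z"
    then have "phi x \<le> h x z" unfolding phi_def by (intro cSUP_least Z(2)) auto
    then show "phi x - h x z = 0" using gn[OF that] by simp
  qed
  have gc: "continuous_on (X \<times> Z) (\<lambda>w. phi (fst w) - h (fst w) (snd w))"
    by (intro continuous_on_diff hc continuous_on_compose2[OF phic, of "X \<times> Z" fst]) 
       (auto intro!: continuous_intros)
  have cpt: "compact (X \<times> Z)" using compact_Times[OF X Z(1)] .
  show ih: "integrable alpha (\<lambda>w. h (fst w) (snd w))"
    by (rule cont_integrable[OF cb(5) cb(2) cpt hc])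
  have iphi: "integrable alpha (\<lambda>w. phi (fst w))"
    by (rule cont_integrable[OF cb(5) cb(2) cpt continuous_on_compose2[OF phic, of "X \<times> Z" fst]])
       (auto intro!: continuous_intros)
  have pm: "phi \<in> borel_measurable mu"
    using borel_measurable_continuous_on_restrict[OF phic] measurable_cong_sets[OF smu refl] by blast
  have d: "distr alpha mu fst = mu" using c unfolding carried_distribution_def by blast
  have "(\<integral>w. phi (fst w) \<partial>alpha) = (\<integral>x. phi x \<partial>mu)"
    using integral_distr[OF cb(3) pm] d by simp
  then show "(\<integral>w. (SUP z\<in>Z. h (fst w) z) - h (fst w) (snd w) \<partial>alpha)
       = (\<integral>x. (SUP z\<in>Z. h x z) \<partial>mu) - (\<integral>w. h (fst w) (snd w) \<partial>alpha)"
    using Bochner_Integration.integral_diff[OF iphi ih] unfolding phi_def by simp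
  show "0 \<le> (\<integral>w. (SUP z\<in>Z. h (fst w) z) - h (fst w) (snd w) \<partial>alpha)"
    by (rule integral_nonneg_AE, rule AE_I2) (use gn cb(1) in \<open>auto simp: phi_def\<close>)
  show "(\<forall>x\<in>X. F x \<subseteq> {z\<in>Z. \<forall>z'\<in>Z. h x z' \<le> h x z}) \<Longrightarrow>
       (\<integral>w. (SUP z\<in>Z. h (fst w) z) - h (fst w) (snd w) \<partial>alpha) = 0"
  proof -
    assume F: "\<forall>x\<in>X. F x \<subseteq> {z\<in>Z. \<forall>z'\<in>Z. h x z' \<le> h x z}"
    have "AE w in alpha. snd w \<in> F (fst w)" using c unfolding carried_distribution_def by blast
    then have "AE w in alpha. phi (fst w) - h (fst w) (snd w) = 0"
    proof (rule AE_mp, intro AE_I2 impI)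
      fix w assume "w \<in> space alpha" "snd w \<in> F (fst w)"
      then show "phi (fst w) - h (fst w) (snd w) = 0" using F g0 cb(1) by (auto simp: mem_Times_iff)
    qed
    then show ?thesis unfolding phi_def by (rule integral_eq_zero_AE)
  qed
  show "(\<integral>w. (SUP z\<in>Z. h (fst w) z) - h (fst w) (snd w) \<partial>alpha) = 0 \<Longrightarrow>
       disintegrates X Z mu alpha P \<Longrightarrow>
       AE x in mu. measure (P x) {z\<in>Z. \<forall>z'\<in>Z. h x z' \<le> h x z} = 1"
  proof -
    assume i0: "(\<integral>w. (SUP z\<in>Z. h (fst w) z) - h (fst w) (snd w) \<partial>alpha) = 0"
      and dis: "disintegrates X Z mu alpha P"
    have "AE x in mu. measure (P x) {z\<in>Z. (\<lambda>w. phi (fst w) - h (fst w) (snd w)) (x,z) = 0} = 1"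
      by (rule disint_one[OF dis smu X Z(1) gc]) (use gn i0 in \<open>auto simp: phi_def\<close>)
    then show ?thesis
    proof (rule AE_mp, intro AE_I2 impI)
      fix x assume "x \<in> space mu" and m: "measure (P x) {z\<in>Z. (\<lambda>w. phi (fst w) - h (fst w) (snd w)) (x,z) = 0} = 1"
      then have x: "x \<in> X" using cb(4) by simp
      have "{z\<in>Z. (\<lambda>w. phi (fst w) - h (fst w) (snd w)) (x,z) = 0} = {z\<in>Z. \<forall>z'\<in>Z. h x z' \<le> h x z}"
        using g0[OF x] by auto
      then show "measure (P x) {z\<in>Z. \<forall>z'\<in>Z. h x z' \<le> h x z} = 1" using m by simp
    qed
  qed
qed



lemma clear_side:
  fixes X :: "'a::euclidean_space set" and Z0 :: "'c::euclidean_space set" and p :: "'c \<Rightarrow> real"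
  assumes sa: "sets alpha = sets (restrict_space borel (X \<times> Z))" and Z: "Z = Z0 \<union> {zd, zs}"
    and Z0c: "compact Z0" and pc: "continuous_on Z p" and pd: "p zd = 0" and ps: "p zs = 0"
  shows "(\<integral>w. p (snd w) \<partial>alpha) =
           (\<integral>z. indicator Z0 z *\<^sub>R p z \<partial>(density (distr alpha borel snd) (\<lambda>z. ennreal (indicator Z0 z))))"
    "\<And>A. A \<in> sets borel \<Longrightarrow> emeasure (density (distr alpha borel snd) (\<lambda>z. ennreal (indicator Z0 z))) A
           = emeasure alpha (X \<times> (A \<inter> Z0))"
proof -
  have spa: "space alpha = X \<times> Z" using space_rb[OF sa] .
  have Z0b[measurable]: "Z0 \<in> sets borel" using compact_imp_closed[OF Z0c] by (simp add: borel_closed)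
  have "snd \<in> measurable (restrict_space borel (X \<times> Z)) borel"
    by (rule measurable_restrict_space1, rule borel_measurable_continuous_onI, intro continuous_intros)
  then have sm[measurable]: "snd \<in> measurable alpha borel"
    using measurable_cong_sets[OF sa refl] by blast
  define q where "q = (\<lambda>z. indicator Z0 z *\<^sub>R p z)"
  have qm[measurable]: "q \<in> borel_measurable borel"
    unfolding q_def by (rule borel_measurable_continuous_on_indicator[OF Z0b continuous_on_subset[OF pc]]) (auto simp: Z)
  have "(\<integral>w. p (snd w) \<partial>alpha) = (\<integral>w. q (snd w) \<partial>alpha)"
  proof (rule Bochner_Integration.integral_cong[OF refl])
    fix w assume "w \<in> space alpha"
    then have "snd w \<in> Z" using spa mem_Times_iff by blast
    then show "p (snd w) = q (snd w)" using pd ps by (auto simp: q_def Z indicator_def)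
  qed
  also have "\<dots> = (\<integral>z. q z \<partial>distr alpha borel snd)"
    using integral_distr[OF sm qm] by simp
  also have "\<dots> = (\<integral>z. indicator Z0 z *\<^sub>R q z \<partial>distr alpha borel snd)"
    by (rule Bochner_Integration.integral_cong) (auto simp: q_def indicator_def)
  also have "\<dots> = (\<integral>z. q z \<partial>(density (distr alpha borel snd) (\<lambda>z. ennreal (indicator Z0 z))))"
    by (rule integral_density[symmetric]) (simp_all add: measurable_distr_eq1)
  finally show "(\<integral>w. p (snd w) \<partial>alpha) =
           (\<integral>z. indicator Z0 z *\<^sub>R p z \<partial>(density (distr alpha borel snd) (\<lambda>z. ennreal (indicator Z0 z))))"
    unfolding q_def .
  fix A :: "'c set" assume A[measurable]: "A \<in> sets borel"
  have "emeasure (density (distr alpha borel snd) (\<lambda>z. ennreal (indicator Z0 z))) A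
      = (\<integral>\<^sup>+ z. ennreal (indicator Z0 z) * indicator A z \<partial>distr alpha borel snd)"
    by (rule emeasure_density) simp_all
  also have "\<dots> = (\<integral>\<^sup>+ z. indicator (A \<inter> Z0) z \<partial>distr alpha borel snd)"
    by (rule nn_integral_cong) (auto simp: indicator_def)
  also have "\<dots> = emeasure (distr alpha borel snd) (A \<inter> Z0)"
    by (rule nn_integral_indicator) simp
  also have "\<dots> = emeasure alpha (snd -` (A \<inter> Z0) \<inter> space alpha)"
    by (rule emeasure_distr[OF sm]) simp
  also have "snd -` (A \<inter> Z0) \<inter> space alpha = X \<times> (A \<inter> Z0)"
    using spa Z by auto
  finally show "emeasure (density (distr alpha borel snd) (\<lambda>z. ennreal (indicator Z0 z))) A
           = emeasure alpha (X \<times> (A \<inter> Z0))" .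
qed

lemma clearing:
  fixes X :: "'a::euclidean_space set" and Y :: "'b::euclidean_space set"
    and Z0 :: "'c::euclidean_space set" and p :: "'c \<Rightarrow> real"
  assumes sa: "sets alpha = sets (restrict_space borel (X \<times> Z))"
    and sb: "sets beta = sets (restrict_space borel (Y \<times> Z))" and Z: "Z = Z0 \<union> {zd, zs}"
    and Z0c: "compact Z0" and pc: "continuous_on Z p" and pd: "p zd = 0" and ps: "p zs = 0"
    and eqm: "\<forall>A. A \<in> sets borel \<and> A \<subseteq> Z0 \<longrightarrow> emeasure alpha (X \<times> A) = emeasure beta (Y \<times> A)"
  shows "(\<integral>w. p (snd w) \<partial>alpha) = (\<integral>w. p (snd w) \<partial>beta)"
proof -
  note a = clear_side[OF sa Z Z0c pc pd ps] and b = clear_side[OF sb Z Z0c pc pd ps]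
  have Z0b: "Z0 \<in> sets borel" using compact_imp_closed[OF Z0c] by (simp add: borel_closed)
  have "density (distr alpha borel snd) (\<lambda>z. ennreal (indicator Z0 z))
      = density (distr beta borel snd) (\<lambda>z. ennreal (indicator Z0 z))"
  proof (rule measure_eqI)
    show "sets (density (distr alpha borel snd) (\<lambda>z. ennreal (indicator Z0 z))) =
          sets (density (distr beta borel snd) (\<lambda>z. ennreal (indicator Z0 z)))" by simp
    fix A assume "A \<in> sets (density (distr alpha borel snd) (\<lambda>z. ennreal (indicator Z0 z)))"
    then have A: "A \<in> sets borel" by simp
    have "A \<inter> Z0 \<in> sets borel" using A Z0b by simp
    then show "emeasure (density (distr alpha borel snd) (\<lambda>z. ennreal (indicator Z0 z))) A =
          emeasure (density (distr beta borel snd) (\<lambda>z. ennreal (indicator Z0 z))) A"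
      using a(2)[OF A] b(2)[OF A] eqm[rule_format, of "A \<inter> Z0"] by simp
  qed
  then show ?thesis using a(1) b(1) by simp
qed



lemma ext_cont:
  fixes X :: "'a::euclidean_space set" and Z0 :: "'c::euclidean_space set" and f :: "'a \<Rightarrow> 'c \<Rightarrow> real"
  assumes X: "compact X" and Z0: "compact Z0" and nd: "zd \<notin> Z0" and ns: "zs \<notin> Z0"
    and C: "C1_first X Z0 f"
  shows "continuous_on (X \<times> (Z0 \<union> {zd, zs}))
           (\<lambda>w. if snd w = zd then c1 else if snd w = zs then c2 else f (fst w) (snd w))"
proof -
  obtain U where U: "X \<times> Z0 \<subseteq> U" "continuous_on U (\<lambda>(x,z). f x z)"
    using C unfolding C1_first_def by blast
  have c0: "continuous_on (X \<times> Z0) (\<lambda>w. f (fst w) (snd w))"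
    using continuous_on_subset[OF U(2) U(1)] by (simp add: case_prod_beta')
  have c0': "continuous_on (X \<times> Z0) (\<lambda>w. if snd w = zd then c1 else if snd w = zs then c2 else f (fst w) (snd w))"
    by (rule continuous_on_cong[THEN iffD1, OF refl _ c0]) (use nd ns in auto)
  have cd: "continuous_on (X \<times> {zd}) (\<lambda>w. if snd w = zd then c1 else if snd w = zs then c2 else f (fst w) (snd w))"
    by (rule continuous_on_cong[THEN iffD1, OF refl _ continuous_on_const[of _ c1]]) auto
  have cs: "continuous_on (X \<times> {zs}) (\<lambda>w. if snd w = zd then c1 else if snd w = zs then c2 else f (fst w) (snd w))"
  proof (cases "zs = zd")
    case True then show ?thesis using cd by simp
  next
    case False
    show ?thesis
      by (rule continuous_on_cong[THEN iffD1, OF refl _ continuous_on_const[of _ c2]]) (use False in auto)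
  qed
  have cl: "closed (X \<times> Z0)" "closed (X \<times> {zd})" "closed (X \<times> {zs})"
    using X Z0 by (auto intro!: compact_imp_closed compact_Times)
  have "continuous_on ((X \<times> Z0) \<union> ((X \<times> {zd}) \<union> (X \<times> {zs})))
           (\<lambda>w. if snd w = zd then c1 else if snd w = zs then c2 else f (fst w) (snd w))"
    by (intro continuous_on_closed_Un c0' cd cs cl closed_Un)
  moreover have "(X \<times> Z0) \<union> ((X \<times> {zd}) \<union> (X \<times> {zs})) = X \<times> (Z0 \<union> {zd, zs})" by auto
  ultimately show ?thesis by simp
qed

lemma pair:
  fixes X :: "'a::euclidean_space set" and Y :: "'b::euclidean_space set"
    and Z0 :: "'c::euclidean_space set" and p :: "'c \<Rightarrow> real"
    and uE :: "'a \<Rightarrow> 'c \<Rightarrow> real" and vE :: "'b \<Rightarrow> 'c \<Rightarrow> real"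
  assumes X: "compact X" and Y: "compact Y" and Z0: "compact Z0" and Z: "Z = Z0 \<union> {zd, zs}"
    and uc: "continuous_on (X \<times> Z) (\<lambda>w. uE (fst w) (snd w))"
    and vc: "continuous_on (Y \<times> Z) (\<lambda>w. vE (fst w) (snd w))"
    and pc: "continuous_on Z p" and pd: "p zd = 0" and ps: "p zs = 0"
    and ca: "carried_distribution X Z mu F alpha" and cb: "carried_distribution Y Z nu G beta"
    and smu: "sets mu = sets (restrict_space borel X)" and fmu: "finite_measure mu"
    and snu: "sets nu = sets (restrict_space borel Y)" and fnu: "finite_measure nu"
    and eqm: "\<forall>A. A \<in> sets borel \<and> A \<subseteq> Z0 \<longrightarrow> emeasure alpha (X \<times> A) = emeasure beta (Y \<times> A)"
  shows "(\<integral>w. (SUP z\<in>Z. uE (fst w) z - p z) - (uE (fst w) (snd w) - p (snd w)) \<partial>alpha)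
       + (\<integral>w. (SUP z\<in>Z. p z - vE (fst w) z) - (p (snd w) - vE (fst w) (snd w)) \<partial>beta)
       = (\<integral>x. (SUP z\<in>Z. uE x z - p z) \<partial>mu) + (\<integral>y. (SUP z\<in>Z. p z - vE y z) \<partial>nu)
         - ((\<integral>w. uE (fst w) (snd w) \<partial>alpha) - (\<integral>w. vE (fst w) (snd w) \<partial>beta))"
proof -
  have Zc: "compact Z" using Z0 Z by auto
  have Zne: "Z \<noteq> {}" using Z by auto
  have psc: "continuous_on (X \<times> Z) (\<lambda>w. p (snd w))" "continuous_on (Y \<times> Z) (\<lambda>w. p (snd w))"
    by (auto intro!: continuous_on_compose2[OF pc] continuous_intros)
  have hc: "continuous_on (X \<times> Z) (\<lambda>w. uE (fst w) (snd w) - p (snd w))"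
    by (intro continuous_on_diff uc psc)
  have kc: "continuous_on (Y \<times> Z) (\<lambda>w. p (snd w) - vE (fst w) (snd w))"
    by (intro continuous_on_diff vc psc)
  note sa = side[OF X Zc Zne, of "\<lambda>x z. uE x z - p z", OF hc ca smu fmu]
  note sb = side[OF Y Zc Zne, of "\<lambda>x z. p z - vE x z", OF kc cb snu fnu]
  note cba = carried_basic[OF ca smu fmu] and cbb = carried_basic[OF cb snu fnu]
  have cpa: "compact (X \<times> Z)" "compact (Y \<times> Z)" using X Y Zc by (auto intro: compact_Times)
  have iu: "integrable alpha (\<lambda>w. uE (fst w) (snd w))" by (rule cont_integrable[OF cba(5) cba(2) cpa(1) uc])
  have ipa: "integrable alpha (\<lambda>w. p (snd w))" by (rule cont_integrable[OF cba(5) cba(2) cpa(1) psc(1)])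
  have iv: "integrable beta (\<lambda>w. vE (fst w) (snd w))" by (rule cont_integrable[OF cbb(5) cbb(2) cpa(2) vc])
  have ipb: "integrable beta (\<lambda>w. p (snd w))" by (rule cont_integrable[OF cbb(5) cbb(2) cpa(2) psc(2)])
  have e1: "(\<integral>w. uE (fst w) (snd w) - p (snd w) \<partial>alpha) = (\<integral>w. uE (fst w) (snd w) \<partial>alpha) - (\<integral>w. p (snd w) \<partial>alpha)"
    by (rule Bochner_Integration.integral_diff[OF iu ipa])
  have e2: "(\<integral>w. p (snd w) - vE (fst w) (snd w) \<partial>beta) = (\<integral>w. p (snd w) \<partial>beta) - (\<integral>w. vE (fst w) (snd w) \<partial>beta)"
    by (rule Bochner_Integration.integral_diff[OF ipb iv])
  have cl: "(\<integral>w. p (snd w) \<partial>alpha) = (\<integral>w. p (snd w) \<partial>beta)"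
    by (rule clearing[OF cba(5) cbb(5) Z Z0 pc pd ps eqm])
  show ?thesis using sa(2) sb(2) e1 e2 cl by simp
qed

theorem theorem12:
  fixes X :: "'a::euclidean_space set" and Y :: "'b::euclidean_space set"
    and Z0 :: "'c::euclidean_space set" and zd zs :: 'c
    and mu :: "'a measure" and nu :: "'b measure"
    and u :: "'a \<Rightarrow> 'c \<Rightarrow> real" and v :: "'b \<Rightarrow> 'c \<Rightarrow> real"
    and p1 p2 :: "'c \<Rightarrow> real"
    and alpha1 alpha2 :: "('a \<times> 'c) measure" and beta1 beta2 :: "('b \<times> 'c) measure"
    and P1x P2x :: "'a \<Rightarrow> 'c measure" and P1y P2y :: "'b \<Rightarrow> 'c measure"
  assumes "compact X" and "compact Y" and "compact Z0"
    and "zd \<noteq> zs" and "zd \<notin> Z0" and "zs \<notin> Z0"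
    and "sets mu = sets (restrict_space borel X)" and "finite_measure mu"
    and "sets nu = sets (restrict_space borel Y)" and "finite_measure nu"
    and "C1_first X Z0 u" and "C1_first Y Z0 v"
    and eq1: "equilibrium X Y Z0 zd zs mu nu (uext zd zs u) (vext zd zs v) p1 alpha1 beta1"
    and eq2: "equilibrium X Y Z0 zd zs mu nu (uext zd zs u) (vext zd zs v) p2 alpha2 beta2"
    and "disintegrates X (Zset Z0 zd zs) mu alpha1 P1x"
    and "disintegrates X (Zset Z0 zd zs) mu alpha2 P2x"
    and "disintegrates Y (Zset Z0 zd zs) nu beta1 P1y"
    and "disintegrates Y (Zset Z0 zd zs) nu beta2 P2y"
  shows "(AE x in mu. measure (P2x x) (Dset (Zset Z0 zd zs) (uext zd zs u) p1 x) = 1 \<and>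
                      measure (P1x x) (Dset (Zset Z0 zd zs) (uext zd zs u) p1 x) = 1) \<and>
         (AE y in nu. measure (P2y y) (Sset (Zset Z0 zd zs) (vext zd zs v) p1 y) = 1 \<and>
                      measure (P1y y) (Sset (Zset Z0 zd zs) (vext zd zs v) p1 y) = 1)"
proof -
  note X = assms(1) and Y = assms(2) and Z0 = assms(3) and dn = assms(4) and nd = assms(5) and ns = assms(6)
  note smu = assms(7) and fmu = assms(8) and snu = assms(9) and fnu = assms(10)
  note dis1x = assms(15) and dis2x = assms(16) and dis1y = assms(17) and dis2y = assms(18)
  define Z where "Z = Zset Z0 zd zs"
  define uE where "uE = uext zd zs u"
  define vE where "vE = vext zd zs v"
  have Z: "Z = Z0 \<union> {zd, zs}" unfolding Z_def Zset_def ..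
  have Zc: "compact Z" using Z0 Z by auto
  have Zne: "Z \<noteq> {}" using Z by auto
  have uc: "continuous_on (X \<times> Z) (\<lambda>w. uE (fst w) (snd w))"
    using ext_cont[OF X Z0 nd ns assms(11), of 0 "-1"] unfolding Z uE_def uext_def by simp
  have vc0: "continuous_on (Y \<times> Z) (\<lambda>w. if snd w = zd then 1 else if snd w = zs then 0 else v (fst w) (snd w))"
    using ext_cont[OF Y Z0 nd ns assms(12), of 1 0] unfolding Z by simp
  have vc: "continuous_on (Y \<times> Z) (\<lambda>w. vE (fst w) (snd w))"
    by (rule continuous_on_cong[THEN iffD1, OF refl _ vc0]) (use dn in \<open>auto simp: vE_def vext_def\<close>)
  have E1: "continuous_on Z p1" "p1 zd = 0" "p1 zs = 0"
      "carried_distribution X Z mu (Dset Z uE p1) alpha1"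
      "carried_distribution Y Z nu (Sset Z vE p1) beta1"
      "\<forall>A. A \<in> sets borel \<and> A \<subseteq> Z0 \<longrightarrow> emeasure alpha1 (X \<times> A) = emeasure beta1 (Y \<times> A)"
    using eq1 unfolding equilibrium_def admissible_def price_system_def Z_def[symmetric]
      uE_def[symmetric] vE_def[symmetric] by blast+
  have E2: "continuous_on Z p2" "p2 zd = 0" "p2 zs = 0"
      "carried_distribution X Z mu (Dset Z uE p2) alpha2"
      "carried_distribution Y Z nu (Sset Z vE p2) beta2"
      "\<forall>A. A \<in> sets borel \<and> A \<subseteq> Z0 \<longrightarrow> emeasure alpha2 (X \<times> A) = emeasure beta2 (Y \<times> A)"
    using eq2 unfolding equilibrium_def admissible_def price_system_def Z_def[symmetric]
      uE_def[symmetric] vE_def[symmetric] by blast+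
  note P11 = pair[OF X Y Z0 Z uc vc E1(1-3) E1(4) E1(5) smu fmu snu fnu E1(6)]
  note P12 = pair[OF X Y Z0 Z uc vc E2(1-3) E1(4) E1(5) smu fmu snu fnu E1(6)]
  note P21 = pair[OF X Y Z0 Z uc vc E1(1-3) E2(4) E2(5) smu fmu snu fnu E2(6)]
  note P22 = pair[OF X Y Z0 Z uc vc E2(1-3) E2(4) E2(5) smu fmu snu fnu E2(6)]
  have psc: "continuous_on (X \<times> Z) (\<lambda>w. p (snd w))" "continuous_on (Y \<times> Z) (\<lambda>w. p (snd w))"
    if "continuous_on Z p" for p :: "'c \<Rightarrow> real"
    by (auto intro!: continuous_on_compose2[OF that] continuous_intros)
  have hc: "continuous_on (X \<times> Z) (\<lambda>w. uE (fst w) (snd w) - p (snd w))"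
    if "continuous_on Z p" for p :: "'c \<Rightarrow> real"
    by (intro continuous_on_diff uc psc that)
  have kc: "continuous_on (Y \<times> Z) (\<lambda>w. p (snd w) - vE (fst w) (snd w))"
    if "continuous_on Z p" for p :: "'c \<Rightarrow> real"
    by (intro continuous_on_diff vc psc that)
  note D11 = side[OF X Zc Zne, of "\<lambda>x z. uE x z - p1 z", OF hc[OF E1(1)] E1(4) smu fmu]
  note D21 = side[OF X Zc Zne, of "\<lambda>x z. uE x z - p1 z", OF hc[OF E1(1)] E2(4) smu fmu]
  note D12 = side[OF X Zc Zne, of "\<lambda>x z. uE x z - p2 z", OF hc[OF E2(1)] E1(4) smu fmu]
  note D22 = side[OF X Zc Zne, of "\<lambda>x z. uE x z - p2 z", OF hc[OF E2(1)] E2(4) smu fmu]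
  note S11 = side[OF Y Zc Zne, of "\<lambda>x z. p1 z - vE x z", OF kc[OF E1(1)] E1(5) snu fnu]
  note S21 = side[OF Y Zc Zne, of "\<lambda>x z. p1 z - vE x z", OF kc[OF E1(1)] E2(5) snu fnu]
  note S12 = side[OF Y Zc Zne, of "\<lambda>x z. p2 z - vE x z", OF kc[OF E2(1)] E1(5) snu fnu]
  note S22 = side[OF Y Zc Zne, of "\<lambda>x z. p2 z - vE x z", OF kc[OF E2(1)] E2(5) snu fnu]
  have Dsub: "\<forall>x\<in>X. Dset Z uE p x \<subseteq> {z\<in>Z. \<forall>z'\<in>Z. uE x z' - p z' \<le> uE x z - p z}" for p
    unfolding Dset_def by auto
  have Ssub: "\<forall>y\<in>Y. Sset Z vE p y \<subseteq> {z\<in>Z. \<forall>z'\<in>Z. p z' - vE y z' \<le> p z - vE y z}" for p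
    unfolding Sset_def by auto
  have a11: "(\<integral>w. (SUP z\<in>Z. uE (fst w) z - p1 z) - (uE (fst w) (snd w) - p1 (snd w)) \<partial>alpha1) = 0"
    using D11(4)[OF Dsub] .
  have b11: "(\<integral>w. (SUP z\<in>Z. p1 z - vE (fst w) z) - (p1 (snd w) - vE (fst w) (snd w)) \<partial>beta1) = 0"
    using S11(4)[OF Ssub] .
  have a22: "(\<integral>w. (SUP z\<in>Z. uE (fst w) z - p2 z) - (uE (fst w) (snd w) - p2 (snd w)) \<partial>alpha2) = 0"
    using D22(4)[OF Dsub] .
  have b22: "(\<integral>w. (SUP z\<in>Z. p2 z - vE (fst w) z) - (p2 (snd w) - vE (fst w) (snd w)) \<partial>beta2) = 0"
    using S22(4)[OF Ssub] .
  have a21: "(\<integral>w. (SUP z\<in>Z. uE (fst w) z - p1 z) - (uE (fst w) (snd w) - p1 (snd w)) \<partial>alpha2) = 0"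
   and b21: "(\<integral>w. (SUP z\<in>Z. p1 z - vE (fst w) z) - (p1 (snd w) - vE (fst w) (snd w)) \<partial>beta2) = 0"
    using P11 P12 P21 P22 a11 b11 a22 b22 D21(3) S21(3) D12(3) S12(3) by linarith+
  have Deq: "Dset (Zset Z0 zd zs) (uext zd zs u) p1 x = {z\<in>Z. \<forall>z'\<in>Z. uE x z' - p1 z' \<le> uE x z - p1 z}" for x
    unfolding Dset_def Z_def uE_def ..
  have Seq: "Sset (Zset Z0 zd zs) (vext zd zs v) p1 y = {z\<in>Z. \<forall>z'\<in>Z. p1 z' - vE y z' \<le> p1 z - vE y z}" for y
    unfolding Sset_def Z_def vE_def by auto
  have dis: "disintegrates X Z mu alpha1 P1x" "disintegrates X Z mu alpha2 P2x"
    "disintegrates Y Z nu beta1 P1y" "disintegrates Y Z nu beta2 P2y"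
    using dis1x dis2x dis1y dis2y unfolding Z_def by auto
  have r1: "AE x in mu. measure (P2x x) {z\<in>Z. \<forall>z'\<in>Z. uE x z' - p1 z' \<le> uE x z - p1 z} = 1"
    using D21(5)[OF a21 dis(2)] .
  have r2: "AE x in mu. measure (P1x x) {z\<in>Z. \<forall>z'\<in>Z. uE x z' - p1 z' \<le> uE x z - p1 z} = 1"
    using D11(5)[OF a11 dis(1)] .
  have r3: "AE y in nu. measure (P2y y) {z\<in>Z. \<forall>z'\<in>Z. p1 z' - vE y z' \<le> p1 z - vE y z} = 1"
    using S21(5)[OF b21 dis(4)] .
  have r4: "AE y in nu. measure (P1y y) {z\<in>Z. \<forall>z'\<in>Z. p1 z' - vE y z' \<le> p1 z - vE y z} = 1"
    using S11(5)[OF b11 dis(3)] .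
  show ?thesis unfolding Deq Seq using r1 r2 r3 r4 by (auto elim: AE_mp[OF AE_conjI])
qed

end
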